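(* Let $G_0$ be a non-abelian finite simple group such that the exact sequence $1\to\mathrm{Inn}(G_0)\to\mathrm{Aut}(G_0)\to\mathrm{Out}(G_0)\to1$ splits. Then for every integer $N\ge1$ and every finite group $G$, every extension of $G_0^N$ by $G$ is a semidirect product $G_0^N\rtimes G$ (i.e. every exact sequence $1\to G_0^N\to\Gamma\to G\to1$ splits).
   Context: A group $\Gamma$ is an extension of $N$ by $H$ if there is an exact sequence $1\to N\to\Gamma\to H\to1$. $\mathrm{Inn}$, $\mathrm{Aut}$, $\mathrm{Out}$ denote inner, all, and outer automorphism groups. *)

theory Defs
  imports "HOL-Algebra.Algebra"
begin

definition conj_auto :: "('a, 'b) monoid_scheme \<Rightarrow> 'a \<Rightarrow> ('a \<Rightarrow> 'a)" where
  "conj_auto G g = (\<lambda>x\<in>carrier G. g \<otimes>\<^bsub>G\<^esub> x \<otimes>\<^bsub>G\<^esub> inv\<^bsub>G\<^esub> g)"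

definition inn_auto :: "('a, 'b) monoid_scheme \<Rightarrow> ('a \<Rightarrow> 'a) set" where
  "inn_auto G = conj_auto G ` carrier G"

definition InnGroup :: "('a, 'b) monoid_scheme \<Rightarrow> ('a \<Rightarrow> 'a) monoid" where
  "InnGroup G = (AutoGroup G)\<lparr>carrier := inn_auto G\<rparr>"

definition OutGroup :: "('a, 'b) monoid_scheme \<Rightarrow> ('a \<Rightarrow> 'a) set monoid" where
  "OutGroup G = AutoGroup G Mod inn_auto G"

definition out_proj :: "('a, 'b) monoid_scheme \<Rightarrow> ('a \<Rightarrow> 'a) \<Rightarrow> ('a \<Rightarrow> 'a) set" where
  "out_proj G a = inn_auto G #>\<^bsub>AutoGroup G\<^esub> a"

definition aut_out_splits :: "('a, 'b) monoid_scheme \<Rightarrow> bool" where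
  "aut_out_splits G \<longleftrightarrow>
     (\<exists>s \<in> hom (OutGroup G) (AutoGroup G). \<forall>c \<in> carrier (OutGroup G). out_proj G (s c) = c)"

definition group_extension ::
  "('a, 'x) monoid_scheme \<Rightarrow> ('b, 'y) monoid_scheme \<Rightarrow> ('c, 'z) monoid_scheme
     \<Rightarrow> ('a \<Rightarrow> 'b) \<Rightarrow> ('b \<Rightarrow> 'c) \<Rightarrow> bool" where
  "group_extension N Gam H i p \<longleftrightarrow>
     group N \<and> group Gam \<and> group H \<and>
     i \<in> hom N Gam \<and> inj_on i (carrier N) \<and>
     p \<in> hom Gam H \<and> p ` carrier Gam = carrier H \<and>
     i ` carrier N = kernel Gam H p"

definition extension_splits ::
  "('b, 'y) monoid_scheme \<Rightarrow> ('c, 'z) monoid_scheme \<Rightarrow> ('b \<Rightarrow> 'c) \<Rightarrow> bool" where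
  "extension_splits Gam H p \<longleftrightarrow> (\<exists>s \<in> hom H Gam. \<forall>h \<in> carrier H. p (s h) = h)"

end

theory Submission
  imports Defs
begin

lemma auto_mult_eq:
  "a \<in> auto G \<Longrightarrow> b \<in> auto G \<Longrightarrow> a \<otimes>\<^bsub>AutoGroup G\<^esub> b = compose (carrier G) a b"
  by (simp add: AutoGroup_def BijGroup_def auto_def)

lemma one_AutoGroup: "\<one>\<^bsub>AutoGroup G\<^esub> = (\<lambda>x\<in>carrier G. x)"
  by (simp add: AutoGroup_def BijGroup_def)

lemma carrier_AutoGroup: "carrier (AutoGroup G) = auto G"
  by (simp add: AutoGroup_def)

lemma auto_ext:
  assumes "a \<in> auto G" "b \<in> auto G" "\<And>x. x \<in> carrier G \<Longrightarrow> a x = b x"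
  shows "a = b"
proof -
  have "a \<in> extensional (carrier G)" "b \<in> extensional (carrier G)"
    using assms(1,2) by (simp_all add: auto_def Bij_def)
  then show ?thesis using assms(3) by (rule extensionalityI)
qed

lemma auto_hom: "a \<in> auto G \<Longrightarrow> a \<in> hom G G"
  by (simp add: auto_def)

lemma auto_closed: "a \<in> auto G \<Longrightarrow> x \<in> carrier G \<Longrightarrow> a x \<in> carrier G"
  by (meson auto_hom hom_in_carrier)

context group begin

lemma conj_auto_apply: "x \<in> carrier G \<Longrightarrow> conj_auto G g x = g \<otimes> x \<otimes> inv g"
  by (simp add: conj_auto_def)

lemma conj_auto_in:
  assumes g: "g \<in> carrier G" shows "conj_auto G g \<in> auto G"
proof -
  have cancel: "inv g \<otimes> (g \<otimes> z) = z" if "z \<in> carrier G" for z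
    using g that by (simp add: m_assoc[symmetric])
  have cancel2: "g \<otimes> (inv g \<otimes> z) = z" if "z \<in> carrier G" for z
    using g that by (simp add: m_assoc[symmetric])
  have hom: "conj_auto G g \<in> hom G G"
    unfolding hom_def using g
    by (auto simp: conj_auto_def m_assoc cancel)
  have inj: "inj_on (conj_auto G g) (carrier G)"
    by (auto simp: inj_on_def conj_auto_def g)
  have "conj_auto G g ` carrier G = carrier G"
  proof
    show "conj_auto G g ` carrier G \<subseteq> carrier G" using g by (auto simp: conj_auto_def)
    show "carrier G \<subseteq> conj_auto G g ` carrier G"
    proof
      fix y assume y: "y \<in> carrier G"
      have "inv g \<otimes> y \<otimes> g \<in> carrier G" using g y by simp
      moreover have "conj_auto G g (inv g \<otimes> y \<otimes> g) = y"
        using g y by (simp add: conj_auto_def m_assoc cancel2)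
      ultimately show "y \<in> conj_auto G g ` carrier G" by (metis image_eqI)
    qed
  qed
  moreover have "conj_auto G g \<in> extensional (carrier G)"
    by (simp add: conj_auto_def)
  ultimately show ?thesis using hom inj
    unfolding auto_def Bij_def bij_betw_def by blast
qed

lemma inn_sub_auto: "inn_auto G \<subseteq> auto G"
  using conj_auto_in by (auto simp: inn_auto_def)

lemma compose_auto:
  assumes "a \<in> auto G" "b \<in> auto G" shows "compose (carrier G) a b \<in> auto G"
proof -
  interpret A: group "AutoGroup G" by (rule AutoGroup)
  show ?thesis using A.m_closed[of a b] assms auto_mult_eq carrier_AutoGroup by metis
qed

lemma conj_auto_mult:
  assumes g: "g \<in> carrier G" and h: "h \<in> carrier G"
  shows "conj_auto G (g \<otimes> h) = conj_auto G g \<otimes>\<^bsub>AutoGroup G\<^esub> conj_auto G h"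
proof -
  have c: "conj_auto G g \<in> auto G" "conj_auto G h \<in> auto G" "conj_auto G (g \<otimes> h) \<in> auto G"
    using g h conj_auto_in by auto
  have "conj_auto G (g \<otimes> h) = compose (carrier G) (conj_auto G g) (conj_auto G h)"
  proof (rule auto_ext[where G=G])
    show "compose (carrier G) (conj_auto G g) (conj_auto G h) \<in> auto G" by (rule compose_auto[OF c(1,2)])
    fix x assume x: "x \<in> carrier G"
    show "conj_auto G (g \<otimes> h) x = compose (carrier G) (conj_auto G g) (conj_auto G h) x"
      using g h x by (simp add: compose_def conj_auto_apply m_assoc inv_mult_group)
  qed (rule c(3))
  then show ?thesis by (simp add: auto_mult_eq c)
qed

lemma conj_auto_one: "conj_auto G \<one> = \<one>\<^bsub>AutoGroup G\<^esub>"
  by (auto simp: conj_auto_def one_AutoGroup intro!: restrict_ext)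

lemma inn_subgroup: "subgroup (inn_auto G) (AutoGroup G)"
proof -
  interpret A: group "AutoGroup G" by (rule AutoGroup)
  show ?thesis
  proof (rule A.subgroupI)
    show "inn_auto G \<subseteq> carrier (AutoGroup G)" using inn_sub_auto carrier_AutoGroup by metis
    show "inn_auto G \<noteq> {}" by (auto simp: inn_auto_def)
    fix a b assume a: "a \<in> inn_auto G" and b: "b \<in> inn_auto G"
    then obtain g h where g: "g \<in> carrier G" "a = conj_auto G g" and h: "h \<in> carrier G" "b = conj_auto G h"
      by (auto simp: inn_auto_def)
    show "a \<otimes>\<^bsub>AutoGroup G\<^esub> b \<in> inn_auto G"
      using g h conj_auto_mult by (auto simp: inn_auto_def intro!: image_eqI[where x="g \<otimes> h"])
    have "conj_auto G (inv g) \<otimes>\<^bsub>AutoGroup G\<^esub> a = conj_auto G (inv g \<otimes> g)"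
      using conj_auto_mult[of "inv g" g] g by simp
    also have "\<dots> = \<one>\<^bsub>AutoGroup G\<^esub>" using g by (simp add: conj_auto_one)
    finally have e: "conj_auto G (inv g) \<otimes>\<^bsub>AutoGroup G\<^esub> a = \<one>\<^bsub>AutoGroup G\<^esub>" .
    have "inv\<^bsub>AutoGroup G\<^esub> a = conj_auto G (inv g)"
      by (rule A.inv_equality[OF e]) (use g conj_auto_in carrier_AutoGroup in auto)
    then show "inv\<^bsub>AutoGroup G\<^esub> a \<in> inn_auto G" using g by (auto simp: inn_auto_def)
  qed
qed

lemma auto_conj_comm:
  assumes a: "a \<in> auto G" and g: "g \<in> carrier G"
  shows "a \<otimes>\<^bsub>AutoGroup G\<^esub> conj_auto G g = conj_auto G (a g) \<otimes>\<^bsub>AutoGroup G\<^esub> a"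
proof -
  have ag: "a g \<in> carrier G" using a g auto_closed by metis
  have c1: "conj_auto G g \<in> auto G" "conj_auto G (a g) \<in> auto G" using g ag conj_auto_in by auto
  interpret h: group_hom G G a using auto_hom[OF a] by (simp add: group_hom_def group_hom_axioms_def is_group)
  have "compose (carrier G) a (conj_auto G g) = compose (carrier G) (conj_auto G (a g)) a"
  proof (rule auto_ext[where G=G])
    show "compose (carrier G) a (conj_auto G g) \<in> auto G" by (rule compose_auto[OF a c1(1)])
    show "compose (carrier G) (conj_auto G (a g)) a \<in> auto G" by (rule compose_auto[OF c1(2) a])
    fix x assume x: "x \<in> carrier G"
    have ax: "a x \<in> carrier G" using a x auto_closed by metis
    show "compose (carrier G) a (conj_auto G g) x = compose (carrier G) (conj_auto G (a g)) a x"
      using x ax g ag by (simp add: compose_def conj_auto_apply)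
  qed
  then show ?thesis by (simp add: auto_mult_eq a c1)
qed

lemma inn_normal: "inn_auto G \<lhd> AutoGroup G"
proof -
  interpret A: group "AutoGroup G" by (rule AutoGroup)
  show ?thesis
    unfolding A.normal_inv_iff
  proof (intro conjI ballI)
    show "subgroup (inn_auto G) (AutoGroup G)" by (rule inn_subgroup)
    fix x h assume x: "x \<in> carrier (AutoGroup G)" and h: "h \<in> inn_auto G"
    then obtain g where g: "g \<in> carrier G" "h = conj_auto G g" by (auto simp: inn_auto_def)
    have xa: "x \<in> auto G" using x carrier_AutoGroup by metis
    have ca: "conj_auto G (x g) \<in> carrier (AutoGroup G)"
      using conj_auto_in auto_closed xa g carrier_AutoGroup by metis
    have "x \<otimes>\<^bsub>AutoGroup G\<^esub> h \<otimes>\<^bsub>AutoGroup G\<^esub> inv\<^bsub>AutoGroup G\<^esub> x = conj_auto G (x g)"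
    proof -
      have "x \<otimes>\<^bsub>AutoGroup G\<^esub> h = conj_auto G (x g) \<otimes>\<^bsub>AutoGroup G\<^esub> x"
        using auto_conj_comm[OF xa g(1)] g(2) by simp
      then have "x \<otimes>\<^bsub>AutoGroup G\<^esub> h \<otimes>\<^bsub>AutoGroup G\<^esub> inv\<^bsub>AutoGroup G\<^esub> x
         = conj_auto G (x g) \<otimes>\<^bsub>AutoGroup G\<^esub> (x \<otimes>\<^bsub>AutoGroup G\<^esub> inv\<^bsub>AutoGroup G\<^esub> x)"
        using x ca by (simp only: A.m_assoc A.inv_closed)
      then show ?thesis using x ca by (simp only: A.r_inv A.r_one)
    qed
    then show "x \<otimes>\<^bsub>AutoGroup G\<^esub> h \<otimes>\<^bsub>AutoGroup G\<^esub> inv\<^bsub>AutoGroup G\<^esub> x \<in> inn_auto G"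
      using auto_closed[OF xa g(1)] by (simp add: inn_auto_def)
  qed
qed

end

locale psg =
  fixes G0 :: "'a monoid" (structure) and n :: nat
  assumes simple: "simple_group G0" and noncomm: "\<not> comm_group G0"
begin

sublocale simple_group G0 by (rule simple)

abbreviation "I \<equiv> {..<n}"
abbreviation "P \<equiv> product_group I (\<lambda>_. G0)"

definition e :: "nat \<Rightarrow> 'a \<Rightarrow> (nat \<Rightarrow> 'a)" where
  "e k y = (\<lambda>j\<in>I. if j = k then y else \<one>)"

definition F :: "nat \<Rightarrow> (nat \<Rightarrow> 'a) set" where
  "F k = e k ` carrier G0"

lemma groupP: "group P"
  by (simp add: is_group)

lemma multP: "x \<otimes>\<^bsub>P\<^esub> y = (\<lambda>i\<in>I. x i \<otimes> y i)"
  by simp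

lemma invP: "x \<in> carrier P \<Longrightarrow> inv\<^bsub>P\<^esub> x = (\<lambda>i\<in>I. inv (x i))"
  by (simp add: is_group)

lemma P_eqI:
  assumes "x \<in> carrier P" "y \<in> carrier P" "\<And>i. i \<in> I \<Longrightarrow> x i = y i"
  shows "x = y"
proof -
  have "x \<in> PiE I (\<lambda>_. carrier G0)" "y \<in> PiE I (\<lambda>_. carrier G0)" using assms(1,2) by simp_all
  then show ?thesis by (rule PiE_ext) (use assms(3) in auto)
qed

lemma P_comp: "x \<in> carrier P \<Longrightarrow> i \<in> I \<Longrightarrow> x i \<in> carrier G0"
  by auto

lemma e_in: "y \<in> carrier G0 \<Longrightarrow> e k y \<in> carrier P"
  by (auto simp: e_def)

lemma e_inE: "y \<in> carrier G0 \<Longrightarrow> e k y \<in> I \<rightarrow>\<^sub>E carrier G0"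
  using e_in by simp

lemma e_apply: "i \<in> I \<Longrightarrow> e k y i = (if i = k then y else \<one>)"
  by (simp add: e_def)

lemma e_mult: "x \<in> carrier G0 \<Longrightarrow> y \<in> carrier G0 \<Longrightarrow> e k (x \<otimes> y) = e k x \<otimes>\<^bsub>P\<^esub> e k y"
  by (auto simp: e_def intro!: restrict_ext)

lemma e_one: "e k \<one> = \<one>\<^bsub>P\<^esub>"
  by (auto simp: e_def intro!: restrict_ext)

lemma e_inv: "y \<in> carrier G0 \<Longrightarrow> e k (inv y) = inv\<^bsub>P\<^esub> (e k y)"
  using e_in[of y k] by (auto simp: invP e_def intro!: restrict_ext)

lemma e_inj: "k \<in> I \<Longrightarrow> e k x = e k y \<Longrightarrow> x = y"
  by (metis e_apply)

lemma F_iff: "k \<in> I \<Longrightarrow> x \<in> F k \<longleftrightarrow> x \<in> carrier P \<and> (\<forall>j\<in>I. j \<noteq> k \<longrightarrow> x j = \<one>)"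
proof
  assume "k \<in> I" "x \<in> F k"
  then obtain y where "y \<in> carrier G0" "x = e k y" by (auto simp: F_def)
  then show "x \<in> carrier P \<and> (\<forall>j\<in>I. j \<noteq> k \<longrightarrow> x j = \<one>)"
    by (simp add: e_inE e_apply)
next
  assume k: "k \<in> I" and x: "x \<in> carrier P \<and> (\<forall>j\<in>I. j \<noteq> k \<longrightarrow> x j = \<one>)"
  have xc: "x \<in> carrier P" using x by blast
  have "x = e k (x k)"
  proof (rule P_eqI[OF xc])
    show "e k (x k) \<in> carrier P" using xc k by (intro e_in) auto
    fix i assume "i \<in> I" then show "x i = e k (x k) i" using x k by (simp add: e_apply)
  qed
  moreover have "x k \<in> carrier G0" using x k by auto
  ultimately show "x \<in> F k" by (auto simp: F_def)
qed

lemma F_eq: "k \<in> I \<Longrightarrow> x \<in> F k \<Longrightarrow> x = e k (x k)"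
  by (auto simp: F_def e_apply)

lemma F_sub: "F k \<subseteq> carrier P"
  unfolding F_def using e_in by blast

lemma e_in_F: "y \<in> carrier G0 \<Longrightarrow> e k y \<in> F k"
  by (simp add: F_def)

lemma F_normal:
  assumes k: "k \<in> I" shows "F k \<lhd> P"
proof -
  interpret PG: group P by (rule groupP)
  have sg: "subgroup (F k) P"
  proof (rule PG.subgroupI)
    show "F k \<subseteq> carrier P" by (rule F_sub)
    show "F k \<noteq> {}" by (auto simp: F_def)
    fix a b assume a: "a \<in> F k" and b: "b \<in> F k"
    then obtain x y where "x \<in> carrier G0" "a = e k x" "y \<in> carrier G0" "b = e k y" by (auto simp: F_def)
    note xy = this
    then show "inv\<^bsub>P\<^esub> a \<in> F k"
      by (metis e_inv e_in_F inv_closed)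
    have "a \<otimes>\<^bsub>P\<^esub> b = e k (x \<otimes> y)" using xy e_mult[of x y k] by simp
    then show "a \<otimes>\<^bsub>P\<^esub> b \<in> F k" using xy e_in_F[of "x \<otimes> y" k] by simp
  qed
  show ?thesis unfolding PG.normal_inv_iff
  proof (intro conjI ballI sg)
    fix x h assume x: "x \<in> carrier P" and h: "h \<in> F k"
    have hc: "h \<in> carrier P" using h F_sub by auto
    show "x \<otimes>\<^bsub>P\<^esub> h \<otimes>\<^bsub>P\<^esub> inv\<^bsub>P\<^esub> x \<in> F k"
      unfolding F_iff[OF k]
    proof
      show "x \<otimes>\<^bsub>P\<^esub> h \<otimes>\<^bsub>P\<^esub> inv\<^bsub>P\<^esub> x \<in> carrier P" by (rule PG.m_closed[OF PG.m_closed[OF x hc] PG.inv_closed[OF x]])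
      show "\<forall>j\<in>I. j \<noteq> k \<longrightarrow> (x \<otimes>\<^bsub>P\<^esub> h \<otimes>\<^bsub>P\<^esub> inv\<^bsub>P\<^esub> x) j = \<one>"
      proof (intro ballI impI)
        fix j assume j: "j \<in> I" "j \<noteq> k"
        have "x j \<in> carrier G0" using x j by auto
        moreover have "h j = \<one>" using h j unfolding F_iff[OF k] by blast
        ultimately show "(x \<otimes>\<^bsub>P\<^esub> h \<otimes>\<^bsub>P\<^esub> inv\<^bsub>P\<^esub> x) j = \<one>"
          using x j by (simp add: invP)
      qed
    qed
  qed
qed

lemma exists_nontriv: "\<exists>y\<in>carrier G0. y \<noteq> \<one>"
  using simple_not_triv by blast

lemma F_inj:
  assumes k: "k \<in> I" and j: "j \<in> I" and sub: "F k \<subseteq> F j" shows "k = j"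
proof (rule ccontr)
  assume "k \<noteq> j"
  obtain y where y: "y \<in> carrier G0" "y \<noteq> \<one>" using exists_nontriv by blast
  have "e k y \<in> F j" using sub e_in_F[OF y(1)] by blast
  then have "e k y k = \<one>" using F_iff[OF j] k \<open>k \<noteq> j\<close> by blast
  then show False using y k by (simp add: e_apply)
qed

lemma center_trivial:
  assumes z: "z \<in> carrier G0" and c: "\<And>y. y \<in> carrier G0 \<Longrightarrow> z \<otimes> y = y \<otimes> z"
  shows "z = \<one>"
proof -
  define Z where "Z = {z \<in> carrier G0. \<forall>y\<in>carrier G0. z \<otimes> y = y \<otimes> z}"
  have sg: "subgroup Z G0"
  proof (rule subgroupI)
    show "Z \<subseteq> carrier G0" by (auto simp: Z_def)
    show "Z \<noteq> {}" by (auto simp: Z_def intro!: exI[of _ \<one>])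
    fix a b assume a: "a \<in> Z" and b: "b \<in> Z"
    have ac: "a \<in> carrier G0" and ay: "\<And>y. y \<in> carrier G0 \<Longrightarrow> a \<otimes> y = y \<otimes> a"
      using a by (auto simp: Z_def)
    have bc: "b \<in> carrier G0" and by': "\<And>y. y \<in> carrier G0 \<Longrightarrow> b \<otimes> y = y \<otimes> b"
      using b by (auto simp: Z_def)
    have "inv a \<otimes> y = y \<otimes> inv a" if y: "y \<in> carrier G0" for y
    proof -
      have "inv a \<otimes> y = inv a \<otimes> (y \<otimes> a) \<otimes> inv a" using ac y by (simp add: m_assoc)
      also have "\<dots> = inv a \<otimes> (a \<otimes> y) \<otimes> inv a" using ay[OF y] by simp
      also have "\<dots> = y \<otimes> inv a" using ac y by (simp add: m_assoc[symmetric])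
      finally show ?thesis .
    qed
    then show "inv a \<in> Z" using ac by (simp add: Z_def)
    have "a \<otimes> b \<otimes> y = y \<otimes> (a \<otimes> b)" if y: "y \<in> carrier G0" for y
    proof -
      have "a \<otimes> b \<otimes> y = a \<otimes> (y \<otimes> b)" using ac bc y by (simp add: m_assoc by')
      also have "\<dots> = (a \<otimes> y) \<otimes> b" using ac bc y by (simp add: m_assoc)
      also have "\<dots> = y \<otimes> (a \<otimes> b)" using ac bc y ay[OF y] by (simp add: m_assoc)
      finally show ?thesis .
    qed
    then show "a \<otimes> b \<in> Z" using ac bc by (simp add: Z_def)
  qed
  have "Z \<lhd> G0" unfolding normal_inv_iff
  proof (intro conjI ballI sg)
    fix x h assume x: "x \<in> carrier G0" and h: "h \<in> Z"
    have hc: "h \<in> carrier G0" and hx: "h \<otimes> inv x = inv x \<otimes> h" using h x by (auto simp: Z_def)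
    have "x \<otimes> h \<otimes> inv x = x \<otimes> (inv x \<otimes> h)" using hc x by (simp add: m_assoc hx)
    also have "\<dots> = h" using hc x by (simp add: m_assoc[symmetric])
    finally have "x \<otimes> h \<otimes> inv x = h" .
    then show "x \<otimes> h \<otimes> inv x \<in> Z" using h by simp
  qed
  then have "Z = carrier G0 \<or> Z = {\<one>}" by (rule no_real_normal_subgroup)
  moreover have "Z \<noteq> carrier G0"
  proof
    assume "Z = carrier G0"
    then have "comm_group G0"
      by (intro group.group_comm_groupI is_group) (auto simp: Z_def)
    then show False using noncomm by simp
  qed
  moreover have "z \<in> Z" using z c by (auto simp: Z_def)
  ultimately show ?thesis by auto
qed

lemma central_comp:
  assumes z: "z \<in> carrier P" and k: "k \<in> I" and c: "\<And>f. f \<in> F k \<Longrightarrow> z \<otimes>\<^bsub>P\<^esub> f = f \<otimes>\<^bsub>P\<^esub> z"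
  shows "z k = \<one>"
proof (rule center_trivial)
  show "z k \<in> carrier G0" using z k by auto
  fix y assume y: "y \<in> carrier G0"
  have "(z \<otimes>\<^bsub>P\<^esub> e k y) k = (e k y \<otimes>\<^bsub>P\<^esub> z) k" using c[OF e_in_F[OF y]] by simp
  then show "z k \<otimes> y = y \<otimes> z k" using k by (simp add: e_apply)
qed

end

context psg begin

lemma comm_from_commutator:
  assumes a: "a \<in> carrier G0" and b: "b \<in> carrier G0" and eq: "a \<otimes> (b \<otimes> inv a \<otimes> inv b) = \<one>"
  shows "a \<otimes> b = b \<otimes> a"
proof -
  have "a \<otimes> b \<otimes> inv a \<otimes> inv b = \<one>" using eq a b by (simp add: m_assoc)
  then have "a \<otimes> b \<otimes> inv a \<otimes> inv b \<otimes> b \<otimes> a = b \<otimes> a" using a b by simp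
  moreover have "a \<otimes> b \<otimes> inv a \<otimes> inv b \<otimes> b \<otimes> a = a \<otimes> b"
    using a b by (simp add: m_assoc)
  ultimately show ?thesis by simp
qed

lemma normal_contains_F:
  assumes M: "M \<lhd> P" and nt: "M \<noteq> {\<one>\<^bsub>P\<^esub>}" shows "\<exists>k\<in>I. F k \<subseteq> M"
proof -
  interpret PG: group P by (rule groupP)
  have sgM: "subgroup M P" using M by (simp add: normal_def)
  have conjM: "\<And>x h. x \<in> carrier P \<Longrightarrow> h \<in> M \<Longrightarrow> x \<otimes>\<^bsub>P\<^esub> h \<otimes>\<^bsub>P\<^esub> inv\<^bsub>P\<^esub> x \<in> M"
    using M PG.normal_inv_iff by blast
  have subM: "M \<subseteq> carrier P" using sgM subgroup.subset by blast
  have oneM: "\<one>\<^bsub>P\<^esub> \<in> M" using sgM subgroup.one_closed by blast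
  obtain m where m: "m \<in> M" "m \<noteq> \<one>\<^bsub>P\<^esub>" using nt oneM by blast
  have mc: "m \<in> carrier P" using m subM by blast
  obtain k where k: "k \<in> I" "m k \<noteq> \<one>"
  proof (rule ccontr)
    assume "\<not> thesis"
    then have allone: "\<And>k. k \<in> I \<Longrightarrow> m k = \<one>" using that by blast
    have "m = \<one>\<^bsub>P\<^esub>"
      by (rule P_eqI[OF mc PG.one_closed]) (simp add: allone)
    then show False using m by blast
  qed
  have mk: "m k \<in> carrier G0" using mc k by auto
  obtain y where y: "y \<in> carrier G0" "m k \<otimes> y \<noteq> y \<otimes> m k"
    using center_trivial[OF mk] k(2) by blast
  have eky: "e k y \<in> carrier P" using e_in[OF y(1)] .
  define z where "z = m \<otimes>\<^bsub>P\<^esub> (e k y \<otimes>\<^bsub>P\<^esub> inv\<^bsub>P\<^esub> m \<otimes>\<^bsub>P\<^esub> inv\<^bsub>P\<^esub> (e k y))"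
  have "e k y \<otimes>\<^bsub>P\<^esub> inv\<^bsub>P\<^esub> m \<otimes>\<^bsub>P\<^esub> inv\<^bsub>P\<^esub> (e k y) \<in> M"
    using conjM[OF eky subgroup.m_inv_closed[OF sgM m(1)]] .
  then have zM: "z \<in> M" unfolding z_def using subgroup.m_closed[OF sgM m(1)] by blast
  have zc: "z \<in> carrier P" using zM subM by blast
  have zj: "z j = m j \<otimes> (e k y j \<otimes> inv (m j) \<otimes> inv (e k y j))" if j: "j \<in> I" for j
    using j mc eky by (simp add: z_def invP)
  have zF: "z \<in> F k" unfolding F_iff[OF k(1)]
  proof (intro conjI ballI impI zc)
    fix j assume j: "j \<in> I" "j \<noteq> k"
    have "m j \<in> carrier G0" using mc j by auto
    then show "z j = \<one>" using zj[OF j(1)] j by (simp add: e_apply)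
  qed
  have zk: "z k \<noteq> \<one>"
  proof
    assume "z k = \<one>"
    then have "m k \<otimes> (y \<otimes> inv (m k) \<otimes> inv y) = \<one>" using zj[OF k(1)] k by (simp add: e_apply)
    then have "m k \<otimes> y = y \<otimes> m k" by (rule comm_from_commutator[OF mk y(1)])
    then show False using y(2) by blast
  qed
  define H where "H = {y \<in> carrier G0. e k y \<in> M}"
  have sgH: "subgroup H G0"
  proof (rule subgroupI)
    show "H \<subseteq> carrier G0" by (auto simp: H_def)
    have "\<one> \<in> H" using oneM by (simp add: H_def e_one)
    then show "H \<noteq> {}" by blast
    fix a b assume a: "a \<in> H" and b: "b \<in> H"
    then have ac: "a \<in> carrier G0" "e k a \<in> M" and bc: "b \<in> carrier G0" "e k b \<in> M" by (auto simp: H_def)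
    have "e k (inv a) \<in> M" using e_inv[OF ac(1)] subgroup.m_inv_closed[OF sgM ac(2)] by simp
    then show "inv a \<in> H" using ac by (simp add: H_def)
    have "e k (a \<otimes> b) \<in> M" using e_mult[OF ac(1) bc(1)] subgroup.m_closed[OF sgM ac(2) bc(2)] by simp
    then show "a \<otimes> b \<in> H" using ac bc by (simp add: H_def)
  qed
  have "H \<lhd> G0" unfolding normal_inv_iff
  proof (intro conjI ballI sgH)
    fix x h assume x: "x \<in> carrier G0" and h: "h \<in> H"
    then have hc: "h \<in> carrier G0" "e k h \<in> M" by (auto simp: H_def)
    have "e k (x \<otimes> h \<otimes> inv x) = e k x \<otimes>\<^bsub>P\<^esub> e k h \<otimes>\<^bsub>P\<^esub> inv\<^bsub>P\<^esub> (e k x)"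
      using x hc by (simp add: e_mult e_inv)
    also have "\<dots> \<in> M" using conjM[OF e_in[OF x] hc(2)] .
    finally show "x \<otimes> h \<otimes> inv x \<in> H" using x hc by (simp add: H_def)
  qed
  then have "H = carrier G0 \<or> H = {\<one>}" by (rule no_real_normal_subgroup)
  moreover have "z k \<in> H"
  proof -
    have "e k (z k) = z" using F_eq[OF k(1) zF] by simp
    moreover have "z k \<in> carrier G0" using zc k by auto
    ultimately show ?thesis using zM by (simp add: H_def)
  qed
  ultimately have "H = carrier G0" using zk by blast
  then have "F k \<subseteq> M" by (auto simp: F_def H_def)
  then show ?thesis using k(1) by blast
qed

end

declare mult_product_group[simp del] inv_product_group[simp del] one_product_group[simp del]
  carrier_product_group[simp del]

context psg begin

lemma multP_apply: "i \<in> I \<Longrightarrow> (x \<otimes>\<^bsub>P\<^esub> y) i = x i \<otimes> y i"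
  by (simp add: mult_product_group)

lemma invP_apply: "x \<in> carrier P \<Longrightarrow> i \<in> I \<Longrightarrow> (inv\<^bsub>P\<^esub> x) i = inv (x i)"
  by (simp add: invP)

lemma oneP_apply: "i \<in> I \<Longrightarrow> \<one>\<^bsub>P\<^esub> i = \<one>"
  by (simp add: one_product_group)

definition isaut :: "((nat \<Rightarrow> 'a) \<Rightarrow> (nat \<Rightarrow> 'a)) \<Rightarrow> bool" where
  "isaut \<alpha> \<longleftrightarrow> \<alpha> \<in> hom P P \<and> bij_betw \<alpha> (carrier P) (carrier P)"

lemma isaut_gh: "isaut \<alpha> \<Longrightarrow> group_hom P P \<alpha>"
  by (simp add: isaut_def group_hom_def group_hom_axioms_def groupP)

lemma isaut_closed: "isaut \<alpha> \<Longrightarrow> x \<in> carrier P \<Longrightarrow> \<alpha> x \<in> carrier P"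
  unfolding isaut_def using hom_in_carrier[of \<alpha> P P x] by blast

lemma isaut_inj: "isaut \<alpha> \<Longrightarrow> inj_on \<alpha> (carrier P)"
  by (simp add: isaut_def bij_betw_def)

lemma isaut_surj: "isaut \<alpha> \<Longrightarrow> \<alpha> ` carrier P = carrier P"
  by (simp add: isaut_def bij_betw_def)

lemma img_normal:
  assumes a: "isaut \<alpha>" and M: "M \<lhd> P" shows "\<alpha> ` M \<lhd> P"
proof -
  interpret PG: group P by (rule groupP)
  interpret h: group_hom P P \<alpha> by (rule isaut_gh[OF a])
  have sgM: "subgroup M P" using M by (simp add: normal_def)
  have conjM: "\<And>x h. x \<in> carrier P \<Longrightarrow> h \<in> M \<Longrightarrow> x \<otimes>\<^bsub>P\<^esub> h \<otimes>\<^bsub>P\<^esub> inv\<^bsub>P\<^esub> x \<in> M"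
    using M PG.normal_inv_iff by blast
  have subM: "M \<subseteq> carrier P" using sgM subgroup.subset by blast
  show ?thesis unfolding PG.normal_inv_iff
  proof (intro conjI ballI)
    show "subgroup (\<alpha> ` M) P" by (rule h.subgroup_img_is_subgroup[OF sgM])
    fix x h assume x: "x \<in> carrier P" and h: "h \<in> \<alpha> ` M"
    obtain x' where x': "x' \<in> carrier P" "x = \<alpha> x'" using x isaut_surj[OF a] by blast
    obtain h' where h': "h' \<in> M" "h = \<alpha> h'" using h by blast
    have h'c: "h' \<in> carrier P" using h' subM by blast
    have "x \<otimes>\<^bsub>P\<^esub> h \<otimes>\<^bsub>P\<^esub> inv\<^bsub>P\<^esub> x = \<alpha> (x' \<otimes>\<^bsub>P\<^esub> h' \<otimes>\<^bsub>P\<^esub> inv\<^bsub>P\<^esub> x')"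
      using x' h' h'c by (simp add: h.hom_mult h.hom_inv)
    then show "x \<otimes>\<^bsub>P\<^esub> h \<otimes>\<^bsub>P\<^esub> inv\<^bsub>P\<^esub> x \<in> \<alpha> ` M"
      using conjM[OF x'(1) h'(1)] by blast
  qed
qed

lemma preimg_normal:
  assumes a: "isaut \<alpha>" and M: "M \<lhd> P" shows "{x \<in> carrier P. \<alpha> x \<in> M} \<lhd> P"
proof -
  interpret PG: group P by (rule groupP)
  interpret h: group_hom P P \<alpha> by (rule isaut_gh[OF a])
  have sgM: "subgroup M P" using M by (simp add: normal_def)
  have conjM: "\<And>x h. x \<in> carrier P \<Longrightarrow> h \<in> M \<Longrightarrow> x \<otimes>\<^bsub>P\<^esub> h \<otimes>\<^bsub>P\<^esub> inv\<^bsub>P\<^esub> x \<in> M"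
    using M PG.normal_inv_iff by blast
  have sg: "subgroup {x \<in> carrier P. \<alpha> x \<in> M} P"
  proof (rule PG.subgroupI)
    show "{x \<in> carrier P. \<alpha> x \<in> M} \<subseteq> carrier P" by blast
    show "{x \<in> carrier P. \<alpha> x \<in> M} \<noteq> {}"
      using subgroup.one_closed[OF sgM] PG.one_closed by (intro ex_in_conv[THEN iffD1] exI[of _ "\<one>\<^bsub>P\<^esub>"]) simp
    fix a b assume a: "a \<in> {x \<in> carrier P. \<alpha> x \<in> M}" and b: "b \<in> {x \<in> carrier P. \<alpha> x \<in> M}"
    then show "inv\<^bsub>P\<^esub> a \<in> {x \<in> carrier P. \<alpha> x \<in> M}"
      using subgroup.m_inv_closed[OF sgM] by (simp add: h.hom_inv)
    show "a \<otimes>\<^bsub>P\<^esub> b \<in> {x \<in> carrier P. \<alpha> x \<in> M}"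
      using a b subgroup.m_closed[OF sgM] by (simp add: h.hom_mult)
  qed
  show ?thesis unfolding PG.normal_inv_iff
  proof (intro conjI ballI sg)
    fix x h assume x: "x \<in> carrier P" and h: "h \<in> {x \<in> carrier P. \<alpha> x \<in> M}"
    have "\<alpha> (x \<otimes>\<^bsub>P\<^esub> h \<otimes>\<^bsub>P\<^esub> inv\<^bsub>P\<^esub> x) = \<alpha> x \<otimes>\<^bsub>P\<^esub> \<alpha> h \<otimes>\<^bsub>P\<^esub> inv\<^bsub>P\<^esub> (\<alpha> x)"
      using x h by (simp add: h.hom_mult h.hom_inv)
    also have "\<dots> \<in> M" using conjM[OF h.hom_closed[OF x]] h by blast
    finally show "x \<otimes>\<^bsub>P\<^esub> h \<otimes>\<^bsub>P\<^esub> inv\<^bsub>P\<^esub> x \<in> {x \<in> carrier P. \<alpha> x \<in> M}"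
      using x h by simp
  qed
qed

lemma F_nontriv: "F k \<noteq> {\<one>\<^bsub>P\<^esub>}" if k: "k \<in> I"
proof
  assume a: "F k = {\<one>\<^bsub>P\<^esub>}"
  obtain y where y: "y \<in> carrier G0" "y \<noteq> \<one>" using exists_nontriv by blast
  have "e k y = \<one>\<^bsub>P\<^esub>" using e_in_F[OF y(1), of k] a by blast
  then have "e k y = e k \<one>" by (simp add: e_one)
  then show False using e_inj[OF k] y by blast
qed

lemma perm_ex:
  assumes a: "isaut \<alpha>" and k: "k \<in> I" shows "\<exists>j\<in>I. \<alpha> ` F k = F j"
proof -
  interpret PG: group P by (rule groupP)
  interpret h: group_hom P P \<alpha> by (rule isaut_gh[OF a])
  have inj: "inj_on \<alpha> (carrier P)" by (rule isaut_inj[OF a])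
  have N1: "\<alpha> ` F k \<lhd> P" by (rule img_normal[OF a F_normal[OF k]])
  have "\<alpha> ` F k \<noteq> {\<one>\<^bsub>P\<^esub>}"
  proof
    assume "\<alpha> ` F k = {\<one>\<^bsub>P\<^esub>}"
    then have "\<alpha> ` F k = \<alpha> ` {\<one>\<^bsub>P\<^esub>}" by simp
    moreover have "{\<one>\<^bsub>P\<^esub>} \<subseteq> carrier P" by simp
    ultimately have "F k = {\<one>\<^bsub>P\<^esub>}" using inj_on_image_eq_iff[OF inj F_sub, of "{\<one>\<^bsub>P\<^esub>}"] by blast
    then show False using F_nontriv[OF k] by blast
  qed
  then obtain j where j: "j \<in> I" "F j \<subseteq> \<alpha> ` F k" using normal_contains_F[OF N1] by blast
  define Q where "Q = {x \<in> carrier P. \<alpha> x \<in> F j}"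
  have QN: "Q \<lhd> P" unfolding Q_def by (rule preimg_normal[OF a F_normal[OF j(1)]])
  have QF: "Q \<subseteq> F k"
  proof
    fix x assume "x \<in> Q"
    then have x: "x \<in> carrier P" "\<alpha> x \<in> F j" by (auto simp: Q_def)
    then obtain x' where "x' \<in> F k" "\<alpha> x = \<alpha> x'" using j(2) by blast
    moreover have "x' \<in> carrier P" using \<open>x' \<in> F k\<close> F_sub by blast
    ultimately have "x = x'" using inj_onD[OF inj _ x(1)] by blast
    then show "x \<in> F k" using \<open>x' \<in> F k\<close> by blast
  qed
  have "Q \<noteq> {\<one>\<^bsub>P\<^esub>}"
  proof
    assume Q1: "Q = {\<one>\<^bsub>P\<^esub>}"
    have "F j \<noteq> {\<one>\<^bsub>P\<^esub>}" by (rule F_nontriv[OF j(1)])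
    moreover have "\<one>\<^bsub>P\<^esub> \<in> F j" using e_in_F[OF one_closed, of j] by (simp add: e_one)
    ultimately obtain f where f: "f \<in> F j" "f \<noteq> \<one>\<^bsub>P\<^esub>" by blast
    then obtain x where x: "x \<in> F k" "f = \<alpha> x" using j(2) by blast
    have "x \<in> carrier P" using x(1) F_sub by blast
    then have "x \<in> Q" using x f unfolding Q_def by blast
    then have "x = \<one>\<^bsub>P\<^esub>" using Q1 by blast
    then have "f = \<one>\<^bsub>P\<^esub>" using x(2) h.hom_one by simp
    then show False using f(2) by blast
  qed
  then obtain l where l: "l \<in> I" "F l \<subseteq> Q" using normal_contains_F[OF QN] by blast
  have "l = k" using F_inj[OF l(1) k] l(2) QF by blast
  then have "Q = F k" using l(2) QF by blast
  then have "\<alpha> ` F k \<subseteq> F j" unfolding Q_def by blast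
  then show ?thesis using j by blast
qed

definition perm :: "((nat \<Rightarrow> 'a) \<Rightarrow> (nat \<Rightarrow> 'a)) \<Rightarrow> nat \<Rightarrow> nat" where
  "perm \<alpha> k = (THE j. j \<in> I \<and> \<alpha> ` F k = F j)"

lemma perm_spec:
  assumes a: "isaut \<alpha>" and k: "k \<in> I" shows "perm \<alpha> k \<in> I" "\<alpha> ` F k = F (perm \<alpha> k)"
proof -
  obtain j where j: "j \<in> I" "\<alpha> ` F k = F j" using perm_ex[OF a k] by blast
  have "perm \<alpha> k = j" unfolding perm_def
  proof (rule the_equality)
    show "j \<in> I \<and> \<alpha> ` F k = F j" using j by blast
    fix j' assume jj: "j' \<in> I \<and> \<alpha> ` F k = F j'"
    then have "F j' = F j" using trans[OF sym j(2)] by blast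
    then show "j' = j" using F_inj[of j' j] j jj by blast
  qed
  then show "perm \<alpha> k \<in> I" "\<alpha> ` F k = F (perm \<alpha> k)" using j by auto
qed

lemma perm_unique:
  assumes a: "isaut \<alpha>" and k: "k \<in> I" and j: "j \<in> I" and eq: "\<alpha> ` F k = F j"
  shows "perm \<alpha> k = j"
proof -
  have "F (perm \<alpha> k) = F j" using trans[OF sym[OF perm_spec(2)[OF a k]] eq] .
  then show ?thesis using F_inj[OF perm_spec(1)[OF a k] j] by blast
qed

lemma perm_inj:
  assumes a: "isaut \<alpha>" shows "inj_on (perm \<alpha>) I"
proof
  fix k l assume k: "k \<in> I" and l: "l \<in> I" and eq: "perm \<alpha> k = perm \<alpha> l"
  have "\<alpha> ` F k = \<alpha> ` F l" using perm_spec[OF a k] perm_spec[OF a l] eq by simp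
  then have "F k = F l" using inj_on_image_eq_iff[OF isaut_inj[OF a] F_sub F_sub] by blast
  then show "k = l" using F_inj[OF k l] by blast
qed

lemma perm_surj:
  assumes a: "isaut \<alpha>" shows "perm \<alpha> ` I = I"
  using endo_inj_surj[of I "perm \<alpha>"] perm_inj[OF a] perm_spec(1)[OF a] by blast

definition comp :: "((nat \<Rightarrow> 'a) \<Rightarrow> (nat \<Rightarrow> 'a)) \<Rightarrow> nat \<Rightarrow> 'a \<Rightarrow> 'a" where
  "comp \<alpha> k = (\<lambda>y\<in>carrier G0. \<alpha> (e k y) (perm \<alpha> k))"

lemma img_e_F:
  assumes a: "isaut \<alpha>" and k: "k \<in> I" and y: "y \<in> carrier G0"
  shows "\<alpha> (e k y) \<in> F (perm \<alpha> k)"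
  using perm_spec(2)[OF a k] e_in_F[OF y] by blast

lemma comp_closed:
  assumes a: "isaut \<alpha>" and k: "k \<in> I" and y: "y \<in> carrier G0"
  shows "comp \<alpha> k y \<in> carrier G0"
proof -
  have "\<alpha> (e k y) \<in> carrier P" using isaut_closed[OF a e_in[OF y]] .
  then show ?thesis using y perm_spec(1)[OF a k] by (simp add: comp_def P_comp)
qed

lemma img_e_eq:
  assumes a: "isaut \<alpha>" and k: "k \<in> I" and y: "y \<in> carrier G0"
  shows "\<alpha> (e k y) = e (perm \<alpha> k) (comp \<alpha> k y)"
  using F_eq[OF perm_spec(1)[OF a k] img_e_F[OF a k y]] y by (simp add: comp_def)

lemma comp_apply:
  assumes a: "isaut \<alpha>" and x: "x \<in> carrier P" and k: "k \<in> I"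
  shows "\<alpha> x (perm \<alpha> k) = comp \<alpha> k (x k)"
proof -
  interpret PG: group P by (rule groupP)
  interpret h: group_hom P P \<alpha> by (rule isaut_gh[OF a])
  have xk: "x k \<in> carrier G0" using x k by (rule P_comp)
  define f where "f = e k (x k)"
  have fc: "f \<in> carrier P" unfolding f_def by (rule e_in[OF xk])
  define x' where "x' = inv\<^bsub>P\<^esub> f \<otimes>\<^bsub>P\<^esub> x"
  have x'c: "x' \<in> carrier P" unfolding x'_def using fc x by (rule PG.m_closed[OF PG.inv_closed])
  have xeq: "x = f \<otimes>\<^bsub>P\<^esub> x'" unfolding x'_def using fc x by (simp add: PG.m_assoc[symmetric])
  have x'k: "x' k = \<one>" unfolding x'_def using fc x k xk by (simp add: multP_apply invP_apply f_def e_apply)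
  have comm: "x' \<otimes>\<^bsub>P\<^esub> g = g \<otimes>\<^bsub>P\<^esub> x'" if g: "g \<in> F k" for g
  proof (rule P_eqI)
    have gc: "g \<in> carrier P" using g F_sub by blast
    show "x' \<otimes>\<^bsub>P\<^esub> g \<in> carrier P" "g \<otimes>\<^bsub>P\<^esub> x' \<in> carrier P" using gc x'c by (simp_all add: PG.m_closed)
    fix i assume i: "i \<in> I"
    have "x' i \<in> carrier G0" "g i \<in> carrier G0" using x'c gc i by (simp_all add: P_comp)
    moreover have "i \<noteq> k \<Longrightarrow> g i = \<one>" using g i F_iff[OF k] by blast
    ultimately show "(x' \<otimes>\<^bsub>P\<^esub> g) i = (g \<otimes>\<^bsub>P\<^esub> x') i"
      using i x'k by (cases "i = k") (simp_all add: multP_apply)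
  qed
  have comm2: "\<alpha> x' \<otimes>\<^bsub>P\<^esub> g' = g' \<otimes>\<^bsub>P\<^esub> \<alpha> x'" if g': "g' \<in> F (perm \<alpha> k)" for g'
  proof -
    obtain g where g: "g \<in> F k" "g' = \<alpha> g" using g' perm_spec(2)[OF a k] by blast
    have gc: "g \<in> carrier P" using g F_sub by blast
    have "\<alpha> x' \<otimes>\<^bsub>P\<^esub> \<alpha> g = \<alpha> (x' \<otimes>\<^bsub>P\<^esub> g)" using gc x'c by simp
    also have "\<dots> = \<alpha> (g \<otimes>\<^bsub>P\<^esub> x')" using comm[OF g(1)] by simp
    also have "\<dots> = \<alpha> g \<otimes>\<^bsub>P\<^esub> \<alpha> x'" using gc x'c by simp
    finally show ?thesis using g by simp
  qed
  have ax'1: "\<alpha> x' (perm \<alpha> k) = \<one>"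
    by (rule central_comp[OF h.hom_closed[OF x'c] perm_spec(1)[OF a k] comm2])
  have "\<alpha> x = \<alpha> f \<otimes>\<^bsub>P\<^esub> \<alpha> x'" using xeq fc x'c by simp
  then have "\<alpha> x (perm \<alpha> k) = \<alpha> f (perm \<alpha> k) \<otimes> \<alpha> x' (perm \<alpha> k)"
    using perm_spec(1)[OF a k] by (simp add: multP_apply)
  also have "\<dots> = \<alpha> f (perm \<alpha> k)"
    using ax'1 P_comp[OF h.hom_closed[OF fc] perm_spec(1)[OF a k]] by simp
  also have "\<dots> = comp \<alpha> k (x k)" using xk by (simp add: comp_def f_def)
  finally show ?thesis .
qed

lemma comp_auto:
  assumes a: "isaut \<alpha>" and k: "k \<in> I" shows "comp \<alpha> k \<in> auto G0"
proof -
  interpret PG: group P by (rule groupP)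
  interpret h: group_hom P P \<alpha> by (rule isaut_gh[OF a])
  have pk: "perm \<alpha> k \<in> I" by (rule perm_spec(1)[OF a k])
  have hom: "comp \<alpha> k \<in> hom G0 G0"
  proof (rule homI)
    fix x y assume x: "x \<in> carrier G0" and y: "y \<in> carrier G0"
    show "comp \<alpha> k x \<in> carrier G0" by (rule comp_closed[OF a k x])
    have "\<alpha> (e k (x \<otimes> y)) = \<alpha> (e k x) \<otimes>\<^bsub>P\<^esub> \<alpha> (e k y)"
      using x y by (simp add: e_mult e_in)
    then show "comp \<alpha> k (x \<otimes> y) = comp \<alpha> k x \<otimes> comp \<alpha> k y"
      using x y pk by (simp add: comp_def multP_apply)
  qed
  have inj: "inj_on (comp \<alpha> k) (carrier G0)"
  proof
    fix x y assume x: "x \<in> carrier G0" and y: "y \<in> carrier G0" and eq: "comp \<alpha> k x = comp \<alpha> k y"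
    have "\<alpha> (e k x) = \<alpha> (e k y)" using img_e_eq[OF a k x] img_e_eq[OF a k y] eq by simp
    then have "e k x = e k y" using isaut_inj[OF a] e_in[OF x] e_in[OF y] by (meson inj_onD)
    then show "x = y" by (rule e_inj[OF k])
  qed
  have surj: "comp \<alpha> k ` carrier G0 = carrier G0"
  proof
    show "comp \<alpha> k ` carrier G0 \<subseteq> carrier G0" using comp_closed[OF a k] by blast
    show "carrier G0 \<subseteq> comp \<alpha> k ` carrier G0"
    proof
      fix z assume z: "z \<in> carrier G0"
      have "e (perm \<alpha> k) z \<in> \<alpha> ` F k" using perm_spec(2)[OF a k] e_in_F[OF z] by simp
      then obtain y where y: "y \<in> carrier G0" "e (perm \<alpha> k) z = \<alpha> (e k y)" by (auto simp: F_def)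
      have "comp \<alpha> k y = \<alpha> (e k y) (perm \<alpha> k)" using y by (simp add: comp_def)
      also have "\<dots> = z" using y(2)[symmetric] pk by (simp add: e_apply)
      finally show "z \<in> comp \<alpha> k ` carrier G0" using y(1) by (metis image_eqI)
    qed
  qed
  have ext: "comp \<alpha> k \<in> extensional (carrier G0)" by (simp add: comp_def)
  show ?thesis using hom inj surj ext unfolding auto_def Bij_def bij_betw_def by blast
qed

end

context psg begin

lemma perm_compose:
  assumes a: "isaut \<alpha>" and b: "isaut \<beta>" and d: "isaut \<delta>"
    and eq: "\<And>x. x \<in> carrier P \<Longrightarrow> \<delta> x = \<alpha> (\<beta> x)" and k: "k \<in> I"
  shows "perm \<delta> k = perm \<alpha> (perm \<beta> k)"
proof (rule perm_unique[OF d k])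
  have pb: "perm \<beta> k \<in> I" by (rule perm_spec(1)[OF b k])
  show "perm \<alpha> (perm \<beta> k) \<in> I" by (rule perm_spec(1)[OF a pb])
  have "\<delta> ` F k = \<alpha> ` (\<beta> ` F k)"
    using eq F_sub by (auto simp: image_image intro!: image_cong)
  also have "\<dots> = \<alpha> ` F (perm \<beta> k)" using perm_spec(2)[OF b k] by simp
  also have "\<dots> = F (perm \<alpha> (perm \<beta> k))" using perm_spec(2)[OF a pb] by simp
  finally show "\<delta> ` F k = F (perm \<alpha> (perm \<beta> k))" .
qed

lemma comp_compose:
  assumes a: "isaut \<alpha>" and b: "isaut \<beta>" and d: "isaut \<delta>"
    and eq: "\<And>x. x \<in> carrier P \<Longrightarrow> \<delta> x = \<alpha> (\<beta> x)" and k: "k \<in> I"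
  shows "comp \<delta> k = comp \<alpha> (perm \<beta> k) \<otimes>\<^bsub>AutoGroup G0\<^esub> comp \<beta> k"
proof -
  have pb: "perm \<beta> k \<in> I" by (rule perm_spec(1)[OF b k])
  have c1: "comp \<alpha> (perm \<beta> k) \<in> auto G0" by (rule comp_auto[OF a pb])
  have c2: "comp \<beta> k \<in> auto G0" by (rule comp_auto[OF b k])
  have "comp \<delta> k = compose (carrier G0) (comp \<alpha> (perm \<beta> k)) (comp \<beta> k)"
  proof (rule auto_ext[where G=G0])
    show "comp \<delta> k \<in> auto G0" by (rule comp_auto[OF d k])
    show "compose (carrier G0) (comp \<alpha> (perm \<beta> k)) (comp \<beta> k) \<in> auto G0"
      by (rule compose_auto[OF c1 c2])
    fix y assume y: "y \<in> carrier G0"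
    have ey: "e k y \<in> carrier P" by (rule e_in[OF y])
    have "comp \<delta> k y = \<delta> (e k y) (perm \<delta> k)" using y by (simp add: comp_def)
    also have "\<dots> = \<alpha> (\<beta> (e k y)) (perm \<alpha> (perm \<beta> k))"
      using eq[OF ey] perm_compose[OF a b d eq k] by simp
    also have "\<dots> = comp \<alpha> (perm \<beta> k) (\<beta> (e k y) (perm \<beta> k))"
      by (rule comp_apply[OF a isaut_closed[OF b ey] pb])
    also have "\<dots> = comp \<alpha> (perm \<beta> k) (comp \<beta> k y)" using y by (simp add: comp_def)
    finally show "comp \<delta> k y = compose (carrier G0) (comp \<alpha> (perm \<beta> k)) (comp \<beta> k) y"
      using y by (simp add: compose_def)
  qed
  then show ?thesis by (simp add: auto_mult_eq c1 c2)
qed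

lemma inner_perm_comp:
  assumes a: "isaut \<alpha>" and d: "d \<in> carrier P"
    and eq: "\<And>x. x \<in> carrier P \<Longrightarrow> \<alpha> x = d \<otimes>\<^bsub>P\<^esub> x \<otimes>\<^bsub>P\<^esub> inv\<^bsub>P\<^esub> d" and k: "k \<in> I"
  shows "perm \<alpha> k = k" "comp \<alpha> k = conj_auto G0 (d k)"
proof -
  interpret PG: group P by (rule groupP)
  have conjF: "\<And>x h. x \<in> carrier P \<Longrightarrow> h \<in> F k \<Longrightarrow> x \<otimes>\<^bsub>P\<^esub> h \<otimes>\<^bsub>P\<^esub> inv\<^bsub>P\<^esub> x \<in> F k"
    using F_normal[OF k] PG.normal_inv_iff by blast
  have "\<alpha> ` F k \<subseteq> F k"
  proof
    fix z assume "z \<in> \<alpha> ` F k"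
    then obtain h where h: "h \<in> F k" "z = \<alpha> h" by blast
    have "h \<in> carrier P" using h(1) F_sub by blast
    then show "z \<in> F k" using h(2) eq[of h] conjF[OF d h(1)] by simp
  qed
  then have "F (perm \<alpha> k) \<subseteq> F k" using perm_spec(2)[OF a k] by simp
  then show pk: "perm \<alpha> k = k" using F_inj[OF perm_spec(1)[OF a k] k] by blast
  have dk: "d k \<in> carrier G0" using d k by (rule P_comp)
  show "comp \<alpha> k = conj_auto G0 (d k)"
  proof (rule auto_ext[where G=G0])
    show "comp \<alpha> k \<in> auto G0" by (rule comp_auto[OF a k])
    show "conj_auto G0 (d k) \<in> auto G0" by (rule conj_auto_in[OF dk])
    fix y assume y: "y \<in> carrier G0"
    have ey: "e k y \<in> carrier P" by (rule e_in[OF y])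
    have "comp \<alpha> k y = \<alpha> (e k y) k" using y pk by (simp add: comp_def)
    also have "\<dots> = (d \<otimes>\<^bsub>P\<^esub> e k y \<otimes>\<^bsub>P\<^esub> inv\<^bsub>P\<^esub> d) k" using eq[OF ey] by simp
    also have "\<dots> = d k \<otimes> y \<otimes> inv (d k)" using k d by (simp add: multP_apply invP_apply e_apply)
    also have "\<dots> = conj_auto G0 (d k) y" using y by (simp add: conj_auto_apply)
    finally show "comp \<alpha> k y = conj_auto G0 (d k) y" .
  qed
qed

end

context group begin

lemma out_proj_carrier: "a \<in> auto G \<Longrightarrow> out_proj G a \<in> carrier (OutGroup G)"
  by (auto simp: OutGroup_def carrier_FactGroup out_proj_def carrier_AutoGroup)

lemma out_proj_mult:
  assumes "a \<in> auto G" "b \<in> auto G"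
  shows "out_proj G (a \<otimes>\<^bsub>AutoGroup G\<^esub> b) = out_proj G a \<otimes>\<^bsub>OutGroup G\<^esub> out_proj G b"
proof -
  have "(\<lambda>a. inn_auto G #>\<^bsub>AutoGroup G\<^esub> a) \<in> hom (AutoGroup G) (AutoGroup G Mod inn_auto G)"
    by (rule normal.r_coset_hom_Mod[OF inn_normal])
  then show ?thesis using assms unfolding out_proj_def OutGroup_def
    by (simp add: hom_mult carrier_AutoGroup)
qed

lemma out_proj_inn:
  assumes c: "c \<in> carrier G" shows "out_proj G (conj_auto G c) = \<one>\<^bsub>OutGroup G\<^esub>"
proof -
  have "inn_auto G #>\<^bsub>AutoGroup G\<^esub> conj_auto G c = inn_auto G"
    by (rule group.coset_join2[OF AutoGroup])
      (use c conj_auto_in carrier_AutoGroup inn_subgroup in \<open>auto simp: inn_auto_def\<close>)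
  then show ?thesis by (simp add: out_proj_def OutGroup_def)
qed

end

locale splitctx = group G for G (structure) +
  fixes s0
  assumes s0: "s0 \<in> hom (OutGroup G) (AutoGroup G)"
    and sec: "\<And>c. c \<in> carrier (OutGroup G) \<Longrightarrow> out_proj G (s0 c) = c"
begin

definition so where "so a = s0 (out_proj G a)"

lemma so_auto: "a \<in> auto G \<Longrightarrow> so a \<in> auto G"
  unfolding so_def using s0 out_proj_carrier carrier_AutoGroup by (metis hom_in_carrier)

lemma so_mult:
  assumes "a \<in> auto G" "b \<in> auto G"
  shows "so (a \<otimes>\<^bsub>AutoGroup G\<^esub> b) = so a \<otimes>\<^bsub>AutoGroup G\<^esub> so b"
  unfolding so_def using assms out_proj_mult out_proj_carrier s0 by (simp add: hom_mult)

lemma so_idem: "a \<in> auto G \<Longrightarrow> so (so a) = so a"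
  unfolding so_def using sec out_proj_carrier by simp

lemma so_inn: "c \<in> carrier G \<Longrightarrow> so (conj_auto G c) = \<one>\<^bsub>AutoGroup G\<^esub>"
proof -
  assume c: "c \<in> carrier G"
  have "group (OutGroup G)" unfolding OutGroup_def by (rule normal.factorgroup_is_group[OF inn_normal])
  then have "s0 \<one>\<^bsub>OutGroup G\<^esub> = \<one>\<^bsub>AutoGroup G\<^esub>"
    using hom_one[OF s0] AutoGroup by blast
  then show ?thesis unfolding so_def using out_proj_inn[OF c] by simp
qed

lemma so_inner:
  assumes a: "a \<in> auto G" shows "\<exists>c\<in>carrier G. so a = conj_auto G c \<otimes>\<^bsub>AutoGroup G\<^esub> a"
proof -
  interpret A: group "AutoGroup G" by (rule AutoGroup)
  have sa: "so a \<in> carrier (AutoGroup G)" using so_auto[OF a] carrier_AutoGroup by metis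
  have "so a \<in> inn_auto G #>\<^bsub>AutoGroup G\<^esub> so a" by (rule A.rcos_self[OF sa inn_subgroup])
  also have "inn_auto G #>\<^bsub>AutoGroup G\<^esub> so a = out_proj G (so a)" by (simp add: out_proj_def)
  also have "\<dots> = out_proj G a" unfolding so_def using sec out_proj_carrier[OF a] by simp
  finally have "so a \<in> inn_auto G #>\<^bsub>AutoGroup G\<^esub> a" by (simp add: out_proj_def)
  then show ?thesis by (auto simp: r_coset_def inn_auto_def)
qed

end

locale extctx = psg G0 n + splitctx G0 s0
  for G0 :: "'a monoid" and n :: nat and s0 +
  fixes Gam :: "'b monoid" and H :: "'c monoid" and i :: "(nat \<Rightarrow> 'a) \<Rightarrow> 'b" and p :: "'b \<Rightarrow> 'c"
  assumes ext: "group_extension P Gam H i p"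
begin

lemma GamG: "group Gam" and HG: "group H" and ihom: "i \<in> hom P Gam" and iinj: "inj_on i (carrier P)"
  and phom: "p \<in> hom Gam H" and psurj: "p ` carrier Gam = carrier H"
  and iker: "i ` carrier P = kernel Gam H p"
  using ext by (auto simp: group_extension_def)

lemma pgh: "group_hom Gam H p"
  by (simp add: group_hom_def group_hom_axioms_def GamG HG phom)

lemma igh: "group_hom P Gam i"
  by (simp add: group_hom_def group_hom_axioms_def GamG groupP ihom)

lemma i_closed: "x \<in> carrier P \<Longrightarrow> i x \<in> carrier Gam"
  using group_hom.hom_closed[OF igh] by blast

lemma p_i: "x \<in> carrier P \<Longrightarrow> p (i x) = \<one>\<^bsub>H\<^esub>"
  using iker by (auto simp: kernel_def)

lemma ker_i: "y \<in> carrier Gam \<Longrightarrow> p y = \<one>\<^bsub>H\<^esub> \<Longrightarrow> \<exists>d\<in>carrier P. y = i d"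
proof -
  assume "y \<in> carrier Gam" "p y = \<one>\<^bsub>H\<^esub>"
  then have "y \<in> i ` carrier P" using iker by (simp add: kernel_def)
  then show ?thesis by blast
qed

lemma i_inj: "a \<in> carrier P \<Longrightarrow> b \<in> carrier P \<Longrightarrow> i a = i b \<Longrightarrow> a = b"
  using iinj by (meson inj_onD)

definition cg :: "'b \<Rightarrow> (nat \<Rightarrow> 'a) \<Rightarrow> (nat \<Rightarrow> 'a)" where
  "cg \<gamma> = (\<lambda>x\<in>carrier P. inv_into (carrier P) i (\<gamma> \<otimes>\<^bsub>Gam\<^esub> i x \<otimes>\<^bsub>Gam\<^esub> inv\<^bsub>Gam\<^esub> \<gamma>))"

lemma conj_in_img:
  assumes g: "\<gamma> \<in> carrier Gam" and x: "x \<in> carrier P"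
  shows "\<gamma> \<otimes>\<^bsub>Gam\<^esub> i x \<otimes>\<^bsub>Gam\<^esub> inv\<^bsub>Gam\<^esub> \<gamma> \<in> i ` carrier P"
proof -
  interpret Gm: group Gam by (rule GamG)
  interpret Hm: group H by (rule HG)
  interpret ph: group_hom Gam H p by (rule pgh)
  have ix: "i x \<in> carrier Gam" by (rule i_closed[OF x])
  have "p (\<gamma> \<otimes>\<^bsub>Gam\<^esub> i x \<otimes>\<^bsub>Gam\<^esub> inv\<^bsub>Gam\<^esub> \<gamma>) = p \<gamma> \<otimes>\<^bsub>H\<^esub> p (i x) \<otimes>\<^bsub>H\<^esub> inv\<^bsub>H\<^esub> (p \<gamma>)"
    using g ix by simp
  also have "\<dots> = \<one>\<^bsub>H\<^esub>" using p_i[OF x] g by simp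
  finally show ?thesis using iker g ix by (simp add: kernel_def)
qed

lemma cg_spec:
  assumes g: "\<gamma> \<in> carrier Gam" and x: "x \<in> carrier P"
  shows "cg \<gamma> x \<in> carrier P" "i (cg \<gamma> x) = \<gamma> \<otimes>\<^bsub>Gam\<^esub> i x \<otimes>\<^bsub>Gam\<^esub> inv\<^bsub>Gam\<^esub> \<gamma>"
  using conj_in_img[OF g x] x by (simp_all add: cg_def inv_into_into f_inv_into_f)

lemma cg_eqI:
  assumes g: "\<gamma> \<in> carrier Gam" and x: "x \<in> carrier P" and y: "y \<in> carrier P"
    and eq: "i y = \<gamma> \<otimes>\<^bsub>Gam\<^esub> i x \<otimes>\<^bsub>Gam\<^esub> inv\<^bsub>Gam\<^esub> \<gamma>"
  shows "cg \<gamma> x = y"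
  using i_inj[OF cg_spec(1)[OF g x] y] cg_spec(2)[OF g x] eq by simp

lemma cg_isaut:
  assumes g: "\<gamma> \<in> carrier Gam" shows "isaut (cg \<gamma>)"
proof -
  interpret Gm: group Gam by (rule GamG)
  interpret PG: group P by (rule groupP)
  interpret ih: group_hom P Gam i by (rule igh)
  have hom: "cg \<gamma> \<in> hom P P"
  proof (rule homI)
    fix x y assume x: "x \<in> carrier P" and y: "y \<in> carrier P"
    show "cg \<gamma> x \<in> carrier P" by (rule cg_spec(1)[OF g x])
    show "cg \<gamma> (x \<otimes>\<^bsub>P\<^esub> y) = cg \<gamma> x \<otimes>\<^bsub>P\<^esub> cg \<gamma> y"
    proof (rule cg_eqI[OF g])
      show "x \<otimes>\<^bsub>P\<^esub> y \<in> carrier P" using x y by simp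
      show "cg \<gamma> x \<otimes>\<^bsub>P\<^esub> cg \<gamma> y \<in> carrier P" using cg_spec(1)[OF g x] cg_spec(1)[OF g y] by simp
      have ix: "i x \<in> carrier Gam" and iy: "i y \<in> carrier Gam" using x y i_closed by auto
      have "i (cg \<gamma> x \<otimes>\<^bsub>P\<^esub> cg \<gamma> y) = i (cg \<gamma> x) \<otimes>\<^bsub>Gam\<^esub> i (cg \<gamma> y)"
        using cg_spec(1)[OF g x] cg_spec(1)[OF g y] by simp
      also have "\<dots> = (\<gamma> \<otimes>\<^bsub>Gam\<^esub> i x \<otimes>\<^bsub>Gam\<^esub> inv\<^bsub>Gam\<^esub> \<gamma>) \<otimes>\<^bsub>Gam\<^esub> (\<gamma> \<otimes>\<^bsub>Gam\<^esub> i y \<otimes>\<^bsub>Gam\<^esub> inv\<^bsub>Gam\<^esub> \<gamma>)"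
        using cg_spec(2)[OF g x] cg_spec(2)[OF g y] by simp
      also have "\<dots> = \<gamma> \<otimes>\<^bsub>Gam\<^esub> (i x \<otimes>\<^bsub>Gam\<^esub> i y) \<otimes>\<^bsub>Gam\<^esub> inv\<^bsub>Gam\<^esub> \<gamma>"
        using g ix iy by (simp add: Gm.m_assoc Gm.inv_solve_left')
      also have "\<dots> = \<gamma> \<otimes>\<^bsub>Gam\<^esub> i (x \<otimes>\<^bsub>P\<^esub> y) \<otimes>\<^bsub>Gam\<^esub> inv\<^bsub>Gam\<^esub> \<gamma>" using x y by simp
      finally show "i (cg \<gamma> x \<otimes>\<^bsub>P\<^esub> cg \<gamma> y) = \<gamma> \<otimes>\<^bsub>Gam\<^esub> i (x \<otimes>\<^bsub>P\<^esub> y) \<otimes>\<^bsub>Gam\<^esub> inv\<^bsub>Gam\<^esub> \<gamma>" .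
    qed
  qed
  have inj: "inj_on (cg \<gamma>) (carrier P)"
  proof
    fix x y assume x: "x \<in> carrier P" and y: "y \<in> carrier P" and eq: "cg \<gamma> x = cg \<gamma> y"
    have ix: "i x \<in> carrier Gam" and iy: "i y \<in> carrier Gam" using x y i_closed by auto
    have "\<gamma> \<otimes>\<^bsub>Gam\<^esub> i x \<otimes>\<^bsub>Gam\<^esub> inv\<^bsub>Gam\<^esub> \<gamma> = \<gamma> \<otimes>\<^bsub>Gam\<^esub> i y \<otimes>\<^bsub>Gam\<^esub> inv\<^bsub>Gam\<^esub> \<gamma>"
      using cg_spec(2)[OF g x] cg_spec(2)[OF g y] eq by simp
    then have "i x = i y" using g ix iy by simp
    then show "x = y" by (rule i_inj[OF x y])
  qed
  have surj: "cg \<gamma> ` carrier P = carrier P"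
  proof
    show "cg \<gamma> ` carrier P \<subseteq> carrier P" using cg_spec(1)[OF g] by blast
    show "carrier P \<subseteq> cg \<gamma> ` carrier P"
    proof
      fix z assume z: "z \<in> carrier P"
      have gi: "inv\<^bsub>Gam\<^esub> \<gamma> \<in> carrier Gam" using g by simp
      have cancelg: "\<And>a. a \<in> carrier Gam \<Longrightarrow> \<gamma> \<otimes>\<^bsub>Gam\<^esub> (inv\<^bsub>Gam\<^esub> \<gamma> \<otimes>\<^bsub>Gam\<^esub> a) = a"
        using g by (simp add: Gm.m_assoc[symmetric])
      define x where "x = cg (inv\<^bsub>Gam\<^esub> \<gamma>) z"
      have x: "x \<in> carrier P" unfolding x_def by (rule cg_spec(1)[OF gi z])
      have iz: "i z \<in> carrier Gam" by (rule i_closed[OF z])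
      have "cg \<gamma> x = z"
      proof (rule cg_eqI[OF g x z])
        have "i x = inv\<^bsub>Gam\<^esub> \<gamma> \<otimes>\<^bsub>Gam\<^esub> i z \<otimes>\<^bsub>Gam\<^esub> \<gamma>"
          unfolding x_def using cg_spec(2)[OF gi z] g by simp
        then have "\<gamma> \<otimes>\<^bsub>Gam\<^esub> i x \<otimes>\<^bsub>Gam\<^esub> inv\<^bsub>Gam\<^esub> \<gamma>
            = (\<gamma> \<otimes>\<^bsub>Gam\<^esub> inv\<^bsub>Gam\<^esub> \<gamma>) \<otimes>\<^bsub>Gam\<^esub> i z \<otimes>\<^bsub>Gam\<^esub> (\<gamma> \<otimes>\<^bsub>Gam\<^esub> inv\<^bsub>Gam\<^esub> \<gamma>)"
          using g iz by (simp add: Gm.m_assoc cancelg)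
        then show "i z = \<gamma> \<otimes>\<^bsub>Gam\<^esub> i x \<otimes>\<^bsub>Gam\<^esub> inv\<^bsub>Gam\<^esub> \<gamma>"
          using g iz by simp
      qed
      then show "z \<in> cg \<gamma> ` carrier P" using x by blast
    qed
  qed
  show ?thesis unfolding isaut_def bij_betw_def using hom inj surj by blast
qed

lemma cg_mult:
  assumes g: "\<gamma> \<in> carrier Gam" and d: "\<delta> \<in> carrier Gam" and x: "x \<in> carrier P"
  shows "cg (\<gamma> \<otimes>\<^bsub>Gam\<^esub> \<delta>) x = cg \<gamma> (cg \<delta> x)"
proof -
  interpret Gm: group Gam by (rule GamG)
  have gd: "\<gamma> \<otimes>\<^bsub>Gam\<^esub> \<delta> \<in> carrier Gam" using g d by simp
  have dx: "cg \<delta> x \<in> carrier P" by (rule cg_spec(1)[OF d x])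
  have ix: "i x \<in> carrier Gam" by (rule i_closed[OF x])
  show ?thesis
  proof (rule cg_eqI[OF gd x cg_spec(1)[OF g dx]])
    show "i (cg \<gamma> (cg \<delta> x)) = \<gamma> \<otimes>\<^bsub>Gam\<^esub> \<delta> \<otimes>\<^bsub>Gam\<^esub> i x \<otimes>\<^bsub>Gam\<^esub> inv\<^bsub>Gam\<^esub> (\<gamma> \<otimes>\<^bsub>Gam\<^esub> \<delta>)"
      using cg_spec(2)[OF g dx] cg_spec(2)[OF d x] g d ix by (simp add: Gm.m_assoc Gm.inv_mult_group)
  qed
qed

lemma cg_inner:
  assumes d: "d \<in> carrier P" and x: "x \<in> carrier P"
  shows "cg (i d) x = d \<otimes>\<^bsub>P\<^esub> x \<otimes>\<^bsub>P\<^esub> inv\<^bsub>P\<^esub> d"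
proof -
  interpret PG: group P by (rule groupP)
  interpret ih: group_hom P Gam i by (rule igh)
  show ?thesis
    by (rule cg_eqI[OF i_closed[OF d] x]) (use d x in simp_all)
qed

end

context extctx begin

definition S :: "'b set" where
  "S = {\<gamma> \<in> carrier Gam. \<forall>k\<in>I. so (comp (cg \<gamma>) k) = comp (cg \<gamma>) k}"

lemma S_mult:
  assumes g: "\<gamma> \<in> S" and d: "\<delta> \<in> S" shows "\<gamma> \<otimes>\<^bsub>Gam\<^esub> \<delta> \<in> S"
proof -
  interpret Gm: group Gam by (rule GamG)
  have gc: "\<gamma> \<in> carrier Gam" and dc: "\<delta> \<in> carrier Gam" using g d by (auto simp: S_def)
  have gdc: "\<gamma> \<otimes>\<^bsub>Gam\<^esub> \<delta> \<in> carrier Gam" using gc dc by simp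
  have "so (comp (cg (\<gamma> \<otimes>\<^bsub>Gam\<^esub> \<delta>)) k) = comp (cg (\<gamma> \<otimes>\<^bsub>Gam\<^esub> \<delta>)) k" if k: "k \<in> I" for k
  proof -
    have pk: "perm (cg \<delta>) k \<in> I" by (rule perm_spec(1)[OF cg_isaut[OF dc] k])
    have eq: "comp (cg (\<gamma> \<otimes>\<^bsub>Gam\<^esub> \<delta>)) k = comp (cg \<gamma>) (perm (cg \<delta>) k) \<otimes>\<^bsub>AutoGroup G0\<^esub> comp (cg \<delta>) k"
      by (rule comp_compose[OF cg_isaut[OF gc] cg_isaut[OF dc] cg_isaut[OF gdc] cg_mult[OF gc dc] k])
    have s1: "so (comp (cg \<gamma>) (perm (cg \<delta>) k)) = comp (cg \<gamma>) (perm (cg \<delta>) k)"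
      using g pk by (simp add: S_def)
    have s2: "so (comp (cg \<delta>) k) = comp (cg \<delta>) k" using d k by (simp add: S_def)
    show ?thesis unfolding eq
      using so_mult[OF comp_auto[OF cg_isaut[OF gc] pk] comp_auto[OF cg_isaut[OF dc] k]] s1 s2 by simp
  qed
  then show ?thesis using gdc by (simp add: S_def)
qed

lemma S_exists:
  assumes g: "\<gamma> \<in> carrier Gam" shows "\<exists>\<gamma>'\<in>S. p \<gamma>' = p \<gamma>"
proof -
  interpret Gm: group Gam by (rule GamG)
  interpret Hm: group H by (rule HG)
  interpret ph: group_hom Gam H p by (rule pgh)
  interpret PG: group P by (rule groupP)
  let ?\<pi> = "perm (cg \<gamma>)"
  have ag: "isaut (cg \<gamma>)" by (rule cg_isaut[OF g])
  have "\<forall>k\<in>I. \<exists>c. c \<in> carrier G0 \<and> so (comp (cg \<gamma>) k) = conj_auto G0 c \<otimes>\<^bsub>AutoGroup G0\<^esub> comp (cg \<gamma>) k"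
    using so_inner[OF comp_auto[OF ag]] by blast
  then obtain cf where cf: "\<And>k. k \<in> I \<Longrightarrow> cf k \<in> carrier G0 \<and>
      so (comp (cg \<gamma>) k) = conj_auto G0 (cf k) \<otimes>\<^bsub>AutoGroup G0\<^esub> comp (cg \<gamma>) k"
    by metis
  define d where "d = (\<lambda>j\<in>I. cf (inv_into I ?\<pi> j))"
  have inv_in: "inv_into I ?\<pi> j \<in> I" if "j \<in> I" for j
    using that perm_surj[OF ag] by (metis inv_into_into)
  have dc: "d \<in> carrier P"
    unfolding d_def carrier_product_group using cf inv_in by auto
  have dpi: "d (?\<pi> k) = cf k" if k: "k \<in> I" for k
    using k perm_spec(1)[OF ag k] perm_inj[OF ag] by (simp add: d_def)
  have idc: "i d \<in> carrier Gam" by (rule i_closed[OF dc])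
  define \<gamma>' where "\<gamma>' = i d \<otimes>\<^bsub>Gam\<^esub> \<gamma>"
  have gc': "\<gamma>' \<in> carrier Gam" unfolding \<gamma>'_def using idc g by simp
  have "p \<gamma>' = p \<gamma>" unfolding \<gamma>'_def using idc g p_i[OF dc] by simp
  moreover have "\<gamma>' \<in> S"
  proof -
    have "so (comp (cg \<gamma>') k) = comp (cg \<gamma>') k" if k: "k \<in> I" for k
    proof -
      have pk: "?\<pi> k \<in> I" by (rule perm_spec(1)[OF ag k])
      have ai: "isaut (cg (i d))" by (rule cg_isaut[OF idc])
      have "comp (cg \<gamma>') k = comp (cg (i d)) (?\<pi> k) \<otimes>\<^bsub>AutoGroup G0\<^esub> comp (cg \<gamma>) k"
        by (rule comp_compose[OF ai ag cg_isaut[OF gc'] _ k]) (simp add: \<gamma>'_def cg_mult[OF idc g])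
      also have "comp (cg (i d)) (?\<pi> k) = conj_auto G0 (d (?\<pi> k))"
        by (rule inner_perm_comp(2)[OF ai dc cg_inner[OF dc] pk])
      also have "\<dots> = conj_auto G0 (cf k)" using dpi[OF k] by simp
      finally have e1: "comp (cg \<gamma>') k = so (comp (cg \<gamma>) k)" using cf[OF k] by simp
      show ?thesis unfolding e1 by (rule so_idem[OF comp_auto[OF ag k]])
    qed
    then show ?thesis using gc' by (simp add: S_def)
  qed
  ultimately show ?thesis by blast
qed

lemma S_unique:
  assumes g: "\<gamma> \<in> S" and d: "\<delta> \<in> S" and eq: "p \<gamma> = p \<delta>" shows "\<gamma> = \<delta>"
proof -
  interpret Gm: group Gam by (rule GamG)
  interpret Hm: group H by (rule HG)
  interpret ph: group_hom Gam H p by (rule pgh)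
  interpret PG: group P by (rule groupP)
  interpret ih: group_hom P Gam i by (rule igh)
  interpret A: group "AutoGroup G0" by (rule AutoGroup)
  have gc: "\<gamma> \<in> carrier Gam" and dc: "\<delta> \<in> carrier Gam" using g d by (auto simp: S_def)
  have "p (\<delta> \<otimes>\<^bsub>Gam\<^esub> inv\<^bsub>Gam\<^esub> \<gamma>) = \<one>\<^bsub>H\<^esub>" using gc dc eq by simp
  then obtain c where c: "c \<in> carrier P" "\<delta> \<otimes>\<^bsub>Gam\<^esub> inv\<^bsub>Gam\<^esub> \<gamma> = i c"
    using ker_i gc dc by (meson Gm.inv_closed Gm.m_closed)
  have ic: "i c \<in> carrier Gam" by (rule i_closed[OF c(1)])
  have dgc: "\<delta> = i c \<otimes>\<^bsub>Gam\<^esub> \<gamma>"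
    using c(2) gc dc by (metis Gm.inv_solve_right Gm.inv_closed Gm.m_closed)
  have ag: "isaut (cg \<gamma>)" by (rule cg_isaut[OF gc])
  have ai: "isaut (cg (i c))" by (rule cg_isaut[OF ic])
  have c1: "c j = \<one>\<^bsub>G0\<^esub>" if j: "j \<in> I" for j
  proof -
    obtain k where k: "k \<in> I" "j = perm (cg \<gamma>) k" using j perm_surj[OF ag] by blast
    have pk: "perm (cg \<gamma>) k \<in> I" by (rule perm_spec(1)[OF ag k(1)])
    have ck: "c j \<in> carrier G0" using c(1) j by (rule P_comp)
    have cA: "conj_auto G0 (c j) \<in> carrier (AutoGroup G0)" using conj_auto_in[OF ck] carrier_AutoGroup by metis
    have gA: "comp (cg \<gamma>) k \<in> carrier (AutoGroup G0)" using comp_auto[OF ag k(1)] carrier_AutoGroup by metis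
    have "comp (cg \<delta>) k = comp (cg (i c)) (perm (cg \<gamma>) k) \<otimes>\<^bsub>AutoGroup G0\<^esub> comp (cg \<gamma>) k"
      by (rule comp_compose[OF ai ag cg_isaut[OF dc] _ k(1)]) (simp add: dgc cg_mult[OF ic gc])
    also have "comp (cg (i c)) (perm (cg \<gamma>) k) = conj_auto G0 (c j)"
      using inner_perm_comp(2)[OF ai c(1) cg_inner[OF c(1)] pk] k(2) by simp
    finally have e1: "comp (cg \<delta>) k = conj_auto G0 (c j) \<otimes>\<^bsub>AutoGroup G0\<^esub> comp (cg \<gamma>) k" .
    have "comp (cg \<delta>) k = so (comp (cg \<delta>) k)" using d k(1) by (simp add: S_def)
    also have "\<dots> = so (conj_auto G0 (c j)) \<otimes>\<^bsub>AutoGroup G0\<^esub> so (comp (cg \<gamma>) k)"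
      unfolding e1 by (rule so_mult[OF conj_auto_in[OF ck] comp_auto[OF ag k(1)]])
    also have "\<dots> = comp (cg \<gamma>) k" using so_inn[OF ck] g k(1) gA by (simp add: S_def)
    finally have "conj_auto G0 (c j) \<otimes>\<^bsub>AutoGroup G0\<^esub> comp (cg \<gamma>) k = comp (cg \<gamma>) k"
      using e1 by simp
    then have "conj_auto G0 (c j) = \<one>\<^bsub>AutoGroup G0\<^esub>" using cA gA by simp
    then have cc: "conj_auto G0 (c j) y = y" if y: "y \<in> carrier G0" for y
      using y by (simp add: one_AutoGroup)
    show "c j = \<one>\<^bsub>G0\<^esub>"
    proof (rule center_trivial[OF ck])
      fix y assume y: "y \<in> carrier G0"
      have "c j \<otimes>\<^bsub>G0\<^esub> y \<otimes>\<^bsub>G0\<^esub> inv\<^bsub>G0\<^esub> (c j) = y" using cc[OF y] y by (simp add: conj_auto_apply)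
      then have "c j \<otimes>\<^bsub>G0\<^esub> y \<otimes>\<^bsub>G0\<^esub> inv\<^bsub>G0\<^esub> (c j) \<otimes>\<^bsub>G0\<^esub> c j = y \<otimes>\<^bsub>G0\<^esub> c j" by simp
      then show "c j \<otimes>\<^bsub>G0\<^esub> y = y \<otimes>\<^bsub>G0\<^esub> c j" using ck y by (simp add: m_assoc)
    qed
  qed
  have "c = \<one>\<^bsub>P\<^esub>" by (rule P_eqI[OF c(1) PG.one_closed]) (simp add: c1 oneP_apply)
  then show ?thesis using dgc gc by simp
qed

end

context extctx begin
theorem splits: "extension_splits Gam H p"
proof -
  interpret Gm: group Gam by (rule GamG)
  interpret Hm: group H by (rule HG)
  interpret ph: group_hom Gam H p by (rule pgh)
  define sec where "sec h = (THE \<gamma>. \<gamma> \<in> S \<and> p \<gamma> = h)" for h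
  have sec: "sec h \<in> S \<and> p (sec h) = h" if h: "h \<in> carrier H" for h
  proof -
    have "h \<in> p ` carrier Gam" using h psurj by simp
    then obtain \<gamma> where g0: "\<gamma> \<in> carrier Gam" "p \<gamma> = h" by (auto simp del: Set.image_iff)
    have "\<exists>\<gamma>'\<in>S. p \<gamma>' = p \<gamma>" by (rule S_exists[OF g0(1)])
    obtain \<gamma>' where g': "\<gamma>' \<in> S" "p \<gamma>' = h" using \<open>\<exists>\<gamma>'\<in>S. p \<gamma>' = p \<gamma>\<close> g0(2) by auto
    have uq: "x = \<gamma>'" if "x \<in> S \<and> p x = h" for x
    proof -
      have "x \<in> S" "p x = p \<gamma>'" using that g' by auto
      then show ?thesis using S_unique[of x \<gamma>'] g'(1) by blast
    qed
    show ?thesis unfolding sec_def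
    proof (rule theI[of _ \<gamma>'])
      show "\<gamma>' \<in> S \<and> p \<gamma>' = h" using g' by blast
      show "\<And>x. x \<in> S \<and> p x = h \<Longrightarrow> x = \<gamma>'" by (rule uq)
    qed
  qed
  have Ssub: "S \<subseteq> carrier Gam" by (auto simp: S_def)
  have secS: "sec h \<in> S" and secp: "p (sec h) = h" if "h \<in> carrier H" for h
    using sec[OF that] by blast+
  have secc: "sec h \<in> carrier Gam" if "h \<in> carrier H" for h
    using secS[OF that] Ssub by blast
  have "sec \<in> hom H Gam"
  proof (rule homI)
    fix x y assume x: "x \<in> carrier H" and y: "y \<in> carrier H"
    show "sec x \<in> carrier Gam" by (rule secc[OF x])
    have xy: "x \<otimes>\<^bsub>H\<^esub> y \<in> carrier H" using x y by simp
    show "sec (x \<otimes>\<^bsub>H\<^esub> y) = sec x \<otimes>\<^bsub>Gam\<^esub> sec y"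
    proof (rule S_unique)
      show "sec (x \<otimes>\<^bsub>H\<^esub> y) \<in> S" by (rule secS[OF xy])
      show "sec x \<otimes>\<^bsub>Gam\<^esub> sec y \<in> S" by (rule S_mult[OF secS[OF x] secS[OF y]])
      have "p (sec x \<otimes>\<^bsub>Gam\<^esub> sec y) = p (sec x) \<otimes>\<^bsub>H\<^esub> p (sec y)"
        by (rule ph.hom_mult[OF secc[OF x] secc[OF y]])
      then show "p (sec (x \<otimes>\<^bsub>H\<^esub> y)) = p (sec x \<otimes>\<^bsub>Gam\<^esub> sec y)"
        using secp[OF xy] secp[OF x] secp[OF y] by simp
    qed
  qed
  then show ?thesis unfolding extension_splits_def using secp by blast
qed

end

theorem proposition2p8:
  fixes G0 :: "'a monoid" and G :: "'c monoid" and Gam :: "'b monoid"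
    and N :: nat and i :: "(nat \<Rightarrow> 'a) \<Rightarrow> 'b" and p :: "'b \<Rightarrow> 'c"
  assumes "simple_group G0" and "finite (carrier G0)" and "\<not> comm_group G0"
    and "aut_out_splits G0"
    and "N \<ge> 1"
    and "group G" and "finite (carrier G)"
    and "group_extension (product_group {..<N} (\<lambda>_. G0)) Gam G i p"
  shows "extension_splits Gam G p"
proof -
  obtain s0 where s0: "s0 \<in> hom (OutGroup G0) (AutoGroup G0)"
    and sec: "\<forall>c \<in> carrier (OutGroup G0). out_proj G0 (s0 c) = c"
    using assms(4) unfolding aut_out_splits_def by blast
  have gG0: "group G0" using assms(1) by (simp add: simple_group_def)
  have "extctx G0 N s0 Gam G i p"
    unfolding extctx_def psg_def splitctx_def splitctx_axioms_def extctx_axioms_def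
    using assms(1,3,8) s0 sec gG0 by blast
  then show ?thesis by (rule extctx.splits)
qed

end
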